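(* Let $\theta>0$, $n\ge2$, $b\in\{2,\ldots,n\}$, and integers $r_2,\ldots,r_b\ge0$ with $m:=2r_2+3r_3+\cdots+br_b$. Then $$\mathbb{E}\Big(\tilde C_2(n)^{[r_2]}\cdots\tilde C_b(n)^{[r_b]}\Big)=\mathbf{1}(m\le n)\,\frac{n!}{\lambda_n(\theta)\,\theta_{(n)}}\cdot\frac{\lambda_{n-m}(\theta)\,\theta_{(n-m)}}{(n-m)!}\prod_{j=2}^b\Big(\frac{\theta}{j}\Big)^{r_j}.$$ In particular, for $j=2,\ldots,n$, $\mathbb{E}\tilde C_j(n)=\frac{n!}{\lambda_n(\theta)\theta_{(n)}}\cdot\frac{\lambda_{n-j}(\theta)\theta_{(n-j)}}{(n-j)!}\cdot\frac{\theta}{j}$.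
   Context: Fix $\theta>0$. Write $\theta_{(0)}=1$ and $\theta_{(m)}=\theta(\theta+1)\cdots(\theta+m-1)$ for $m\ge1$. $\mathrm{ESF}(\theta)$ is the law of $(C_1(n),\ldots,C_n(n))$ with $\mathbb{P}(C_j(n)=c_j,\,1\le j\le n)=\frac{n!}{\theta_{(n)}}\prod_{j=1}^n(\theta/j)^{c_j}/c_j!$ whenever $\sum_j jc_j=n$ (cycle counts of a random permutation of $\{1,\ldots,n\}$ chosen with probability $\theta^k/\theta_{(n)}$ when it has $k$ cycles). For $n\ge1$, $\lambda_n(\theta)=\mathbb{P}(C_1(n)=0)=\frac{n!}{\theta_{(n)}}\sum_{j=0}^n(-1)^j\frac{\theta^j}{j!}\frac{\theta_{(n-j)}}{(n-j)!}$, and $\lambda_0(\theta)=1$ (so $\lambda_1(\theta)=0$). The derangement cycle counts $(\tilde C_2(n),\ldots,\tilde C_n(n))$ have the law of $(C_2(n),\ldots,C_n(n))$ conditioned on $C_1(n)=0$. For an integer-valued $X$ and $k\ge0$, $X^{[k]}=X(X-1)\cdots(X-k+1)$ denotes the falling factorial, with $X^{[0]}=1$. *)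

theory Defs
  imports Complex_Main
begin

text \<open>Rising factorial theta_(m) is the library's pochhammer theta m.\<close>

definition falling_fact :: "nat \<Rightarrow> nat \<Rightarrow> real" where
  "falling_fact X k = (\<Prod>i<k. (real X - real i))"

definition cycle_vecs :: "nat \<Rightarrow> (nat \<Rightarrow> nat) set" where
  "cycle_vecs n = {c. (\<forall>j. c j \<noteq> 0 \<longrightarrow> 1 \<le> j \<and> j \<le> n) \<and> (\<Sum>j=1..n. j * c j) = n}"

text \<open>ESF(theta) probability mass of the cycle-count vector c.\<close>
definition esf_prob :: "real \<Rightarrow> nat \<Rightarrow> (nat \<Rightarrow> nat) \<Rightarrow> real" where
  "esf_prob \<theta> n c =
     (if c \<in> cycle_vecs n then
        fact n / pochhammer \<theta> n * (\<Prod>j=1..n. (\<theta> / real j) ^ c j / fact (c j))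
      else 0)"

text \<open>lambda_n(theta) = P(C_1(n) = 0), via the explicit formula (which gives lambda_0 = 1).\<close>
definition esf_lambda :: "real \<Rightarrow> nat \<Rightarrow> real" where
  "esf_lambda \<theta> n =
     fact n / pochhammer \<theta> n *
       (\<Sum>j=0..n. (-1) ^ j * \<theta> ^ j / fact j * pochhammer \<theta> (n - j) / fact (n - j))"

text \<open>Expectation of F(C~_2(n),...,C~_n(n)) for the derangement cycle counts, i.e.
  of F(C) under ESF(theta) conditioned on C_1(n) = 0.\<close>
definition derange_expect :: "real \<Rightarrow> nat \<Rightarrow> ((nat \<Rightarrow> nat) \<Rightarrow> real) \<Rightarrow> real" where
  "derange_expect \<theta> n F =
     (\<Sum>c\<in>{c\<in>cycle_vecs n. c 1 = 0}. esf_prob \<theta> n c * F c) /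
     (\<Sum>c\<in>{c\<in>cycle_vecs n. c 1 = 0}. esf_prob \<theta> n c)"

end

theory Submission imports Defs begin

definition wt :: "real \<Rightarrow> nat \<Rightarrow> (nat \<Rightarrow> nat) \<Rightarrow> real" where
  "wt \<theta> N c = (\<Prod>j=1..N. (\<theta> / real j) ^ c j / fact (c j))"
definition DD :: "nat \<Rightarrow> (nat \<Rightarrow> nat) set" where
  "DD k = {c\<in>cycle_vecs k. c 1 = 0}"
definition WW :: "real \<Rightarrow> nat \<Rightarrow> real" where
  "WW \<theta> k = (\<Sum>c\<in>DD k. wt \<theta> k c)"

lemma cv_bound:
  assumes "c \<in> cycle_vecs k" shows "c j \<le> k"
proof (cases "c j = 0")
  case False
  then have j: "1 \<le> j" "j \<le> k" using assms by (auto simp: cycle_vecs_def)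
  have "j * c j \<le> (\<Sum>i=1..k. i * c i)" by (rule member_le_sum) (use j in auto)
  also have "\<dots> = k" using assms by (simp add: cycle_vecs_def)
  finally have a: "j * c j \<le> k" .
  have "1 * c j \<le> j * c j" using j(1) by (rule mult_le_mono1)
  then have "c j \<le> j * c j" by simp
  then show ?thesis using a by (rule le_trans)
qed simp

lemma finite_cv: "finite (cycle_vecs k)"
proof -
  have "cycle_vecs k \<subseteq> {f. \<forall>x. (x \<in> {1..k} \<longrightarrow> f x \<in> {0..k}) \<and> (x \<notin> {1..k} \<longrightarrow> f x = 0)}"
  proof
    fix c assume c: "c \<in> cycle_vecs k"
    have "c x \<in> {0..k}" for x using cv_bound[OF c] by simp
    moreover have "c x = 0" if "x \<notin> {1..k}" for x
      using c that unfolding cycle_vecs_def by auto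
    ultimately show "c \<in> {f. \<forall>x. (x \<in> {1..k} \<longrightarrow> f x \<in> {0..k}) \<and> (x \<notin> {1..k} \<longrightarrow> f x = 0)}"
      by blast
  qed
  thus ?thesis by (rule finite_subset) (rule finite_set_of_finite_funs, auto)
qed

lemma finite_DD: "finite (DD k)"
  unfolding DD_def using finite_cv by simp

lemma ff_le: "k \<le> X \<Longrightarrow> falling_fact X k = fact X / fact (X - k)"
proof (induction k)
  case 0 then show ?case by (simp add: falling_fact_def)
next
  case (Suc k)
  have e: "X - k = Suc (X - Suc k)" using Suc.prems by simp
  have fx: "(fact (X - k)::real) = fact (X - Suc k) * (real X - real k)"
    unfolding e fact_Suc using Suc.prems by (simp add: of_nat_diff)
  have nz: "real X - real k \<noteq> 0" using Suc.prems by simp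
  have "falling_fact X (Suc k) = fact X / fact (X - k) * (real X - real k)"
    using Suc by (simp add: falling_fact_def)
  also have "\<dots> = fact X / fact (X - Suc k)" unfolding fx using nz by simp
  finally show ?case .
qed

lemma ff_gt: "X < k \<Longrightarrow> falling_fact X k = 0"
  unfolding falling_fact_def by (rule prod_zero) auto

lemma ff_0 [simp]: "falling_fact X 0 = 1" by (simp add: falling_fact_def)
lemma ff_1 [simp]: "falling_fact X 1 = real X" by (simp add: falling_fact_def)

lemma factor_id:
  assumes "r \<le> x"
  shows "a ^ x / fact x * falling_fact x r = a ^ r * (a ^ (x - r) / fact (x - r))"
proof -
  have "a ^ x = a ^ r * a ^ (x - r)" using assms by (simp add: power_add[symmetric])
  then show ?thesis using assms by (simp add: ff_le)
qed

lemma wt_ext: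
  assumes "c \<in> cycle_vecs k" "k \<le> N"
  shows "wt \<theta> N c = wt \<theta> k c"
proof -
  have z: "c i = 0" if "k < i" for i using assms that by (auto simp: cycle_vecs_def)
  show ?thesis unfolding wt_def
    by (rule prod.mono_neutral_right) (use assms z in auto)
qed


lemma shift:
  fixes R :: "nat \<Rightarrow> nat"
  assumes supp: "\<And>j. R j \<noteq> 0 \<Longrightarrow> 2 \<le> j \<and> j \<le> n"
  defines "m \<equiv> (\<Sum>j=1..n. j * R j)"
  shows "(\<Sum>c\<in>DD n. wt \<theta> n c * (\<Prod>j=1..n. falling_fact (c j) (R j))) =
         (if m \<le> n then (\<Prod>j=1..n. (\<theta> / real j) ^ R j) * WW \<theta> (n - m) else 0)"
proof -
  define S1 where "S1 = {c\<in>DD n. \<forall>j. R j \<le> c j}"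
  have R1: "R 1 = 0" using supp[of 1] by auto
  have zero: "(\<Prod>j=1..n. falling_fact (c j) (R j)) = 0" if nin: "c \<notin> S1" and cin: "c \<in> DD n" for c
  proof -
    obtain j where j: "c j < R j" using nin cin by (auto simp: S1_def not_le)
    then have "R j \<noteq> 0" by auto
    then have "j \<in> {1..n}" using supp[of j] by auto
    moreover have "falling_fact (c j) (R j) = 0" using j by (rule ff_gt)
    ultimately show ?thesis by (intro prod_zero) auto
  qed
  have S1sub: "S1 \<subseteq> DD n" by (auto simp: S1_def)
  have fin: "finite (DD n)" by (rule finite_DD)
  have red: "(\<Sum>c\<in>DD n. wt \<theta> n c * (\<Prod>j=1..n. falling_fact (c j) (R j))) =
        (\<Sum>c\<in>S1. wt \<theta> n c * (\<Prod>j=1..n. falling_fact (c j) (R j)))"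
    by (rule sum.mono_neutral_right) (use fin S1sub zero in auto)
  have msum: "m \<le> n" if "c \<in> S1" for c
  proof -
    have "m \<le> (\<Sum>j=1..n. j * c j)" unfolding m_def
      by (rule sum_mono) (use that in \<open>auto simp: S1_def\<close>)
    also have "\<dots> = n" using that by (auto simp: S1_def DD_def cycle_vecs_def)
    finally show ?thesis .
  qed
  show ?thesis
  proof (cases "m \<le> n")
    case False
    then have "S1 = {}" using msum by auto
    then show ?thesis using red False by simp
  next
    case True
    define P where "P = (\<Prod>j=1..n. (\<theta> / real j) ^ R j)"
    define \<phi> where "\<phi> = (\<lambda>(c::nat\<Rightarrow>nat) j. c j - R j)"
    define \<psi> where "\<psi> = (\<lambda>(c::nat\<Rightarrow>nat) j. c j + R j)"
    have phimem: "\<phi> c \<in> DD (n - m)" if c: "c \<in> S1" for c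
    proof -
      have cv: "c \<in> cycle_vecs n" "c 1 = 0" "\<And>j. R j \<le> c j" using c by (auto simp: S1_def DD_def)
      have "(\<Sum>i=1..n. i * (c i - R i)) = (\<Sum>i=1..n. i * c i - i * R i)"
        by (simp add: diff_mult_distrib2)
      also have "\<dots> = (\<Sum>i=1..n. i * c i) - m" unfolding m_def
        by (rule sum_subtractf_nat) (use cv in auto)
      also have "\<dots> = n - m" using cv by (simp add: cycle_vecs_def)
      finally have s: "(\<Sum>i=1..n. i * (c i - R i)) = n - m" .
      have sp: "1 \<le> i \<and> i \<le> n - m" if "c i - R i \<noteq> 0" for i
      proof -
        have i: "1 \<le> i" "i \<le> n" using that cv by (auto simp: cycle_vecs_def)
        have "i * 1 \<le> i * (c i - R i)" using that by (intro mult_le_mono2) auto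
        also have "\<dots> \<le> (\<Sum>i=1..n. i * (c i - R i))" by (rule member_le_sum) (use i in auto)
        finally show ?thesis using s i by simp
      qed
      have z: "c i - R i = 0" if "n - m < i" for i
        using sp[of i] that by (cases "c i - R i = 0") auto
      have "(\<Sum>i=1..n-m. i * (c i - R i)) = (\<Sum>i=1..n. i * (c i - R i))"
        by (rule sum.mono_neutral_left) (use z in auto)
      then show ?thesis using s sp cv(2) by (auto simp: DD_def cycle_vecs_def \<phi>_def)
    qed
    have psimem: "\<psi> c \<in> S1" if c: "c \<in> DD (n - m)" for c
    proof -
      have cv: "c \<in> cycle_vecs (n - m)" "c 1 = 0" using c by (auto simp: DD_def)
      have z: "c i = 0" if "n - m < i" for i using cv that by (auto simp: cycle_vecs_def)
      have "(\<Sum>i=1..n-m. i * c i) = (\<Sum>i=1..n. i * c i)"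
        by (rule sum.mono_neutral_left) (use z in auto)
      then have s0: "(\<Sum>i=1..n. i * c i) = n - m" using cv by (simp add: cycle_vecs_def)
      have "(\<Sum>i=1..n. i * (c i + R i)) = (\<Sum>i=1..n. i * c i) + m"
        unfolding m_def by (simp add: add_mult_distrib2 sum.distrib)
      then have s: "(\<Sum>i=1..n. i * (c i + R i)) = n" using s0 True by simp
      have sp: "1 \<le> i \<and> i \<le> n" if "c i + R i \<noteq> 0" for i
      proof (cases "c i = 0")
        case False
        then have "1 \<le> i \<and> i \<le> n - m" using cv(1) by (auto simp: cycle_vecs_def)
        then show ?thesis by auto
      next
        case True
        then show ?thesis using that supp[of i] by auto
      qed
      show ?thesis using s sp cv(2) R1 by (auto simp: S1_def DD_def cycle_vecs_def \<psi>_def)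
    qed
    have bij: "bij_betw \<phi> S1 (DD (n - m))"
    proof (rule bij_betw_byWitness[where f' = \<psi>])
      show "\<forall>a\<in>S1. \<psi> (\<phi> a) = a" by (auto simp: S1_def \<phi>_def \<psi>_def)
      show "\<forall>a'\<in>DD (n - m). \<phi> (\<psi> a') = a'" by (auto simp: \<phi>_def \<psi>_def)
      show "\<phi> ` S1 \<subseteq> DD (n - m)" using phimem by auto
      show "\<psi> ` DD (n - m) \<subseteq> S1" using psimem by auto
    qed
    have trm: "wt \<theta> n c * (\<Prod>j=1..n. falling_fact (c j) (R j)) = P * wt \<theta> (n - m) (\<phi> c)"
      if c: "c \<in> S1" for c
    proof -
      have le: "\<And>j. R j \<le> c j" using c by (auto simp: S1_def)
      have "wt \<theta> n c * (\<Prod>j=1..n. falling_fact (c j) (R j)) =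
            (\<Prod>j=1..n. (\<theta> / real j) ^ c j / fact (c j) * falling_fact (c j) (R j))"
        unfolding wt_def by (rule prod.distrib[symmetric])
      also have "\<dots> = (\<Prod>j=1..n. (\<theta> / real j) ^ R j * ((\<theta> / real j) ^ (c j - R j) / fact (c j - R j)))"
        by (rule prod.cong) (use factor_id[OF le] in auto)
      also have "\<dots> = P * wt \<theta> n (\<phi> c)"
        unfolding P_def wt_def \<phi>_def by (rule prod.distrib)
      also have "wt \<theta> n (\<phi> c) = wt \<theta> (n - m) (\<phi> c)"
        by (rule wt_ext) (use phimem[OF c] in \<open>auto simp: DD_def\<close>)
      finally show ?thesis .
    qed
    have "(\<Sum>c\<in>S1. wt \<theta> n c * (\<Prod>j=1..n. falling_fact (c j) (R j))) =
          (\<Sum>c\<in>S1. P * wt \<theta> (n - m) (\<phi> c))"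
      by (rule sum.cong) (rule refl, rule trm)
    also have "\<dots> = P * (\<Sum>c\<in>S1. wt \<theta> (n - m) (\<phi> c))" by (simp add: sum_distrib_left)
    also have "(\<Sum>c\<in>S1. wt \<theta> (n - m) (\<phi> c)) = WW \<theta> (n - m)"
      unfolding WW_def by (rule sum.reindex_bij_betw[OF bij])
    finally show ?thesis using red True P_def by simp
  qed
qed


lemma ff_Suc0 [simp]: "falling_fact X (Suc 0) = real X" by (simp add: falling_fact_def)

lemma ind_prod:
  assumes "j \<in> {1..k}"
  shows "(\<Prod>i=1..k. falling_fact (c i) (if i = j then 1 else 0)) = real (c j)"
    and "(\<Prod>i=1..k. (\<theta> / real i) ^ (if i = j then 1 else 0)) = \<theta> / real j"
    and "(\<Sum>i=1..k. i * (if i = j then 1 else 0)) = j"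
proof -
  have "(\<Prod>i=1..k. falling_fact (c i) (if i = j then 1 else 0)) = (\<Prod>i=1..k. if i = j then real (c i) else 1)"
    by (rule prod.cong) auto
  also have "\<dots> = real (c j)" using assms by (subst prod.delta) auto
  finally show "(\<Prod>i=1..k. falling_fact (c i) (if i = j then 1 else 0)) = real (c j)" .
  have "(\<Prod>i=1..k. (\<theta> / real i) ^ (if i = j then 1 else 0)) = (\<Prod>i=1..k. if i = j then \<theta> / real i else 1)"
    by (rule prod.cong) auto
  also have "\<dots> = \<theta> / real j" using assms by (subst prod.delta) auto
  finally show "(\<Prod>i=1..k. (\<theta> / real i) ^ (if i = j then 1 else 0)) = \<theta> / real j" .
  have "(\<Sum>i=1..k. i * (if i = j then 1 else 0)) = (\<Sum>i=1..k. if i = j then i else 0)"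
    by (rule sum.cong) auto
  also have "\<dots> = j" using assms by (subst sum.delta) auto
  finally show "(\<Sum>i=1..k. i * (if i = j then 1 else 0)) = j" .
qed

lemma single_moment:
  assumes "j \<in> {2..k}"
  shows "(\<Sum>c\<in>DD k. wt \<theta> k c * real (c j)) = \<theta> / real j * WW \<theta> (k - j)"
proof -
  let ?R = "\<lambda>i. if i = j then 1 else (0::nat)"
  have j1: "j \<in> {1..k}" using assms by auto
  have "(\<Sum>c\<in>DD k. wt \<theta> k c * (\<Prod>i=1..k. falling_fact (c i) (?R i))) =
        (if (\<Sum>i=1..k. i * ?R i) \<le> k then (\<Prod>i=1..k. (\<theta> / real i) ^ ?R i) * WW \<theta> (k - (\<Sum>i=1..k. i * ?R i)) else 0)"
    by (rule shift) (use assms in \<open>auto split: if_splits\<close>)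
  then show ?thesis using ind_prod[OF j1] assms by simp
qed

lemma W_rec: "real k * WW \<theta> k = \<theta> * (\<Sum>j=2..k. WW \<theta> (k - j))"
proof (cases "k = 0")
  case True then show ?thesis by simp
next
  case False
  have kk: "real k = (\<Sum>j=2..k. real j * real (c j))" if c: "c \<in> DD k" for c
  proof -
    have "(\<Sum>j=1..k. j * c j) = k" using c by (simp add: DD_def cycle_vecs_def)
    moreover have "(\<Sum>j=1..k. j * c j) = 1 * c 1 + (\<Sum>j=Suc 1..k. j * c j)"
      using False by (intro sum.atLeast_Suc_atMost) auto
    moreover have "c 1 = 0" using c by (simp add: DD_def)
    ultimately have "(\<Sum>j=2..k. j * c j) = k" by (simp add: numeral_2_eq_2)
    then have "real (\<Sum>j=2..k. j * c j) = real k" by simp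
    then show ?thesis by simp
  qed
  have "real k * WW \<theta> k = (\<Sum>c\<in>DD k. wt \<theta> k c * real k)"
    unfolding WW_def by (simp add: sum_distrib_left mult.commute)
  also have "\<dots> = (\<Sum>c\<in>DD k. \<Sum>j=2..k. real j * (wt \<theta> k c * real (c j)))"
    by (rule sum.cong) (auto simp: kk sum_distrib_left mult_ac)
  also have "\<dots> = (\<Sum>j=2..k. real j * (\<Sum>c\<in>DD k. wt \<theta> k c * real (c j)))"
    by (subst sum.swap) (simp add: sum_distrib_left)
  also have "\<dots> = (\<Sum>j=2..k. \<theta> * WW \<theta> (k - j))"
    by (rule sum.cong) (auto simp: single_moment)
  also have "\<dots> = \<theta> * (\<Sum>j=2..k. WW \<theta> (k - j))" by (simp add: sum_distrib_left)
  finally show ?thesis .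
qed

lemma W_rec3: "real (Suc (Suc k)) * WW \<theta> (Suc (Suc k)) = real (Suc k) * WW \<theta> (Suc k) + \<theta> * WW \<theta> k"
proof -
  have "(\<Sum>j=2..Suc (Suc k). WW \<theta> (Suc (Suc k) - j)) = WW \<theta> k + (\<Sum>j=Suc 2..Suc (Suc k). WW \<theta> (Suc (Suc k) - j))"
    by (subst sum.atLeast_Suc_atMost) auto
  also have "(\<Sum>j=Suc 2..Suc (Suc k). WW \<theta> (Suc (Suc k) - j)) = (\<Sum>j=2..Suc k. WW \<theta> (Suc k - j))"
    by (subst sum.shift_bounds_cl_Suc_ivl) simp
  finally show ?thesis using W_rec[of "Suc (Suc k)" \<theta>] W_rec[of "Suc k" \<theta>]
    by (simp add: distrib_left)
qed

lemma W0: "WW \<theta> 0 = 1"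
proof -
  have "DD 0 = {\<lambda>_. 0}" by (auto simp: DD_def cycle_vecs_def)
  then show ?thesis by (simp add: WW_def wt_def)
qed

lemma W1: "WW \<theta> 1 = 0" using W_rec[of 1 \<theta>] by simp


definition aa :: "real \<Rightarrow> nat \<Rightarrow> real" where "aa \<theta> j = (-1) ^ j * \<theta> ^ j / fact j"
definition bb :: "real \<Rightarrow> nat \<Rightarrow> real" where "bb \<theta> i = pochhammer \<theta> i / fact i"
definition LL :: "real \<Rightarrow> nat \<Rightarrow> real" where "LL \<theta> k = (\<Sum>j=0..k. aa \<theta> j * bb \<theta> (k - j))"
definition MM :: "real \<Rightarrow> nat \<Rightarrow> real" where "MM \<theta> k = (\<Sum>j=0..k. real (k - j) * (aa \<theta> j * bb \<theta> (k - j)))"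

lemma aa_rec: "real (Suc j) * aa \<theta> (Suc j) = - \<theta> * aa \<theta> j"
proof -
  have f: "(fact (Suc j)::real) = real (Suc j) * fact j" by (simp only: fact_Suc)
  have p: "real (Suc j) \<noteq> 0" by (simp only: of_nat_eq_0_iff)
  have "real (Suc j) * aa \<theta> (Suc j) = real (Suc j) * ((-1) ^ Suc j * \<theta> ^ Suc j / (real (Suc j) * fact j))"
    unfolding aa_def f ..
  also have "\<dots> = (-1) ^ Suc j * \<theta> ^ Suc j / fact j" using p by simp
  also have "\<dots> = - \<theta> * aa \<theta> j" unfolding aa_def by simp
  finally show ?thesis .
qed

lemma bb_rec: "real (Suc i) * bb \<theta> (Suc i) = (\<theta> + real i) * bb \<theta> i"
proof -
  have f: "(fact (Suc i)::real) = real (Suc i) * fact i" by (simp only: fact_Suc)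
  have p: "real (Suc i) \<noteq> 0" by (simp only: of_nat_eq_0_iff)
  have "real (Suc i) * bb \<theta> (Suc i) = real (Suc i) * (pochhammer \<theta> i * (\<theta> + real i) / (real (Suc i) * fact i))"
    unfolding bb_def f pochhammer_Suc ..
  also have "\<dots> = pochhammer \<theta> i * (\<theta> + real i) / fact i" using p by simp
  also have "\<dots> = (\<theta> + real i) * bb \<theta> i" unfolding bb_def by simp
  finally show ?thesis .
qed

lemma LA: "(\<Sum>j=0..Suc k. real j * (aa \<theta> j * bb \<theta> (Suc k - j))) = - \<theta> * LL \<theta> k"
proof -
  have "(\<Sum>j=0..Suc k. real j * (aa \<theta> j * bb \<theta> (Suc k - j))) =
        (\<Sum>j=0..k. real (Suc j) * (aa \<theta> (Suc j) * bb \<theta> (Suc k - Suc j)))"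
    by (subst sum.atLeast0_atMost_Suc_shift) simp
  also have "\<dots> = (\<Sum>j=0..k. - \<theta> * (aa \<theta> j * bb \<theta> (k - j)))"
    by (rule sum.cong) (simp_all only: mult.assoc[symmetric] aa_rec diff_Suc_Suc)
  finally show ?thesis by (simp add: LL_def sum_distrib_left)
qed

lemma LB: "MM \<theta> (Suc k) = \<theta> * LL \<theta> k + MM \<theta> k"
proof -
  have "MM \<theta> (Suc k) = (\<Sum>j=0..k. real (Suc k - j) * (aa \<theta> j * bb \<theta> (Suc k - j)))"
    unfolding MM_def by (subst sum.atLeast0_atMost_Suc) simp
  also have "\<dots> = (\<Sum>j=0..k. \<theta> * (aa \<theta> j * bb \<theta> (k - j)) + real (k - j) * (aa \<theta> j * bb \<theta> (k - j)))"
  proof (rule sum.cong)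
    fix j assume "j \<in> {0..k}"
    then have e: "Suc k - j = Suc (k - j)" by auto
    have "real (Suc k - j) * (aa \<theta> j * bb \<theta> (Suc k - j)) = aa \<theta> j * (real (Suc (k - j)) * bb \<theta> (Suc (k - j)))"
      unfolding e by (simp add: mult_ac)
    also have "\<dots> = aa \<theta> j * ((\<theta> + real (k - j)) * bb \<theta> (k - j))" by (simp only: bb_rec)
    finally show "real (Suc k - j) * (aa \<theta> j * bb \<theta> (Suc k - j)) =
       \<theta> * (aa \<theta> j * bb \<theta> (k - j)) + real (k - j) * (aa \<theta> j * bb \<theta> (k - j))"
      by (simp add: algebra_simps)
  qed simp
  also have "\<dots> = \<theta> * LL \<theta> k + MM \<theta> k"
    by (simp add: sum.distrib LL_def MM_def sum_distrib_left)
  finally show ?thesis .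
qed

lemma LC: "real k * LL \<theta> k = (\<Sum>j=0..k. real j * (aa \<theta> j * bb \<theta> (k - j))) + MM \<theta> k"
proof -
  have "real k * LL \<theta> k = (\<Sum>j=0..k. real k * (aa \<theta> j * bb \<theta> (k - j)))"
    unfolding LL_def sum_distrib_left ..
  also have "\<dots> = (\<Sum>j=0..k. real j * (aa \<theta> j * bb \<theta> (k - j)) + real (k - j) * (aa \<theta> j * bb \<theta> (k - j)))"
    by (rule sum.cong) (auto simp: of_nat_diff algebra_simps)
  also have "\<dots> = (\<Sum>j=0..k. real j * (aa \<theta> j * bb \<theta> (k - j))) + MM \<theta> k"
    unfolding MM_def by (rule sum.distrib)
  finally show ?thesis .
qed

lemma LD: "real (Suc k) * LL \<theta> (Suc k) = MM \<theta> k"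
  using LC[where k="Suc k" and \<theta>=\<theta>] LA[where k=k and \<theta>=\<theta>] LB[where k=k and \<theta>=\<theta>] by simp

lemma L_rec3: "real (Suc (Suc k)) * LL \<theta> (Suc (Suc k)) = real (Suc k) * LL \<theta> (Suc k) + \<theta> * LL \<theta> k"
  using LD[where k="Suc k" and \<theta>=\<theta>] LD[where k=k and \<theta>=\<theta>] LB[where k=k and \<theta>=\<theta>] by simp

lemma L0: "LL \<theta> 0 = 1" by (simp add: LL_def aa_def bb_def)
lemma L1: "LL \<theta> 1 = 0" by (simp add: LL_def aa_def bb_def)

lemma W_eq_L: "WW \<theta> k = LL \<theta> k"
proof -
  have "WW \<theta> k = LL \<theta> k \<and> WW \<theta> (Suc k) = LL \<theta> (Suc k)"
  proof (induction k)
    case 0 then show ?case using W0 W1 L0 L1 by simp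
  next
    case (Suc k)
    have "real (Suc (Suc k)) * WW \<theta> (Suc (Suc k)) = real (Suc (Suc k)) * LL \<theta> (Suc (Suc k))"
      using W_rec3[of k \<theta>] L_rec3[of k \<theta>] Suc by simp
    then have "WW \<theta> (Suc (Suc k)) = LL \<theta> (Suc (Suc k))"
      by (simp del: of_nat_Suc)
    then show ?case using Suc by simp
  qed
  then show ?thesis by simp
qed

lemma lambda_W:
  assumes "\<theta> > 0"
  shows "esf_lambda \<theta> k * pochhammer \<theta> k / fact k = WW \<theta> k"
proof -
  have p: "pochhammer \<theta> k > 0" using assms by (rule pochhammer_pos)
  have "esf_lambda \<theta> k = fact k / pochhammer \<theta> k * LL \<theta> k"
    unfolding esf_lambda_def LL_def aa_def bb_def by (simp add: field_simps)
  then show ?thesis using p by (simp add: W_eq_L)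
qed

lemma W_pos:
  assumes "\<theta> > 0" "n \<ge> 2"
  shows "WW \<theta> n > 0"
proof -
  let ?e = "\<lambda>i. if i = n then 1 else (0::nat)"
  have s: "(\<Sum>j=1..n. j * ?e j) = n"
  proof -
    have "(\<Sum>j=1..n. j * ?e j) = (\<Sum>j=1..n. if j = n then j else 0)" by (rule sum.cong) auto
    also have "\<dots> = n" using assms by (subst sum.delta) auto
    finally show ?thesis .
  qed
  have e: "?e \<in> DD n" using assms s by (auto simp: DD_def cycle_vecs_def)
  have wp: "wt \<theta> n c > 0" for c unfolding wt_def using assms by (intro prod_pos) auto
  have "wt \<theta> n ?e \<le> WW \<theta> n" unfolding WW_def
    by (rule member_le_sum) (use e wp finite_DD in \<open>auto intro: less_imp_le\<close>)
  then show ?thesis using wp[of ?e] by linarith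
qed

lemma derange_gen:
  fixes R :: "nat \<Rightarrow> nat"
  assumes th: "\<theta> > 0" and n: "n \<ge> 2" and supp: "\<And>j. R j \<noteq> 0 \<Longrightarrow> 2 \<le> j \<and> j \<le> n"
  shows "derange_expect \<theta> n (\<lambda>c. \<Prod>j=1..n. falling_fact (c j) (R j)) =
    (if (\<Sum>j=1..n. j * R j) \<le> n then (\<Prod>j=1..n. (\<theta> / real j) ^ R j) * WW \<theta> (n - (\<Sum>j=1..n. j * R j)) / WW \<theta> n else 0)"
proof -
  define K where "K = fact n / pochhammer \<theta> n"
  have Knz: "K \<noteq> 0" unfolding K_def using pochhammer_pos[OF th, of n] by simp
  have set: "{c\<in>cycle_vecs n. c 1 = 0} = DD n" by (simp add: DD_def)
  have ep: "esf_prob \<theta> n c = K * wt \<theta> n c" if "c \<in> DD n" for c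
    using that by (simp add: esf_prob_def DD_def K_def wt_def)
  have num: "(\<Sum>c\<in>DD n. esf_prob \<theta> n c * (\<Prod>j=1..n. falling_fact (c j) (R j))) =
        K * (\<Sum>c\<in>DD n. wt \<theta> n c * (\<Prod>j=1..n. falling_fact (c j) (R j)))"
    by (simp add: ep sum_distrib_left mult.assoc)
  have den: "(\<Sum>c\<in>DD n. esf_prob \<theta> n c) = K * WW \<theta> n"
    by (simp add: ep WW_def sum_distrib_left)
  show ?thesis
    unfolding derange_expect_def set num den using Knz shift[OF supp, where \<theta>=\<theta>] by simp
qed


theorem mainTheorem9:
  fixes \<theta> :: real and n b :: nat and r :: "nat \<Rightarrow> nat"
  assumes "\<theta> > 0" and "n \<ge> 2" and "2 \<le> b" and "b \<le> n"
  shows "derange_expect \<theta> n (\<lambda>c. \<Prod>j=2..b. falling_fact (c j) (r j)) =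
           (let m = (\<Sum>j=2..b. j * r j) in
              (if m \<le> n then 1 else 0) *
              (fact n / (esf_lambda \<theta> n * pochhammer \<theta> n)) *
              (esf_lambda \<theta> (n - m) * pochhammer \<theta> (n - m) / fact (n - m)) *
              (\<Prod>j=2..b. (\<theta> / real j) ^ r j)) \<and>
         (\<forall>j\<in>{2..n}. derange_expect \<theta> n (\<lambda>c. real (c j)) =
           fact n / (esf_lambda \<theta> n * pochhammer \<theta> n) *
           (esf_lambda \<theta> (n - j) * pochhammer \<theta> (n - j) / fact (n - j)) * (\<theta> / real j))"
proof -
  note th = assms(1) and nn = assms(2)
  have Wn: "WW \<theta> n > 0" using W_pos[OF th nn] .
  have fn: "(fact n::real) > 0" by simp
  have inv: "fact n / (esf_lambda \<theta> n * pochhammer \<theta> n) = 1 / WW \<theta> n"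
  proof -
    have "esf_lambda \<theta> n * pochhammer \<theta> n = WW \<theta> n * fact n"
      using lambda_W[OF th, of n] fn by (simp add: field_simps)
    then show ?thesis using fn Wn by simp
  qed
  have lw: "esf_lambda \<theta> k * pochhammer \<theta> k / fact k = WW \<theta> k" for k by (rule lambda_W[OF th])
  define R where "R j = (if j \<in> {2..b} then r j else 0)" for j
  have supp: "\<And>j. R j \<noteq> 0 \<Longrightarrow> 2 \<le> j \<and> j \<le> n" using assms by (auto simp: R_def split: if_splits)
  have sub: "{2..b} \<subseteq> {1..n}" using assms by auto
  have Feq: "(\<Prod>j=1..n. falling_fact (c j) (R j)) = (\<Prod>j=2..b. falling_fact (c j) (r j))" for c
  proof -
    have "(\<Prod>j=1..n. falling_fact (c j) (R j)) = (\<Prod>j=2..b. falling_fact (c j) (R j))"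
      by (rule prod.mono_neutral_right) (use sub in \<open>auto simp: R_def\<close>)
    also have "\<dots> = (\<Prod>j=2..b. falling_fact (c j) (r j))" by (rule prod.cong) (auto simp: R_def)
    finally show ?thesis .
  qed
  have meq: "(\<Sum>j=1..n. j * R j) = (\<Sum>j=2..b. j * r j)"
  proof -
    have "(\<Sum>j=1..n. j * R j) = (\<Sum>j=2..b. j * R j)"
      by (rule sum.mono_neutral_right) (use sub in \<open>auto simp: R_def\<close>)
    also have "\<dots> = (\<Sum>j=2..b. j * r j)" by (rule sum.cong) (auto simp: R_def)
    finally show ?thesis .
  qed
  have Peq: "(\<Prod>j=1..n. (\<theta> / real j) ^ R j) = (\<Prod>j=2..b. (\<theta> / real j) ^ r j)"
  proof -
    have "(\<Prod>j=1..n. (\<theta> / real j) ^ R j) = (\<Prod>j=2..b. (\<theta> / real j) ^ R j)"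
      by (rule prod.mono_neutral_right) (use sub in \<open>auto simp: R_def\<close>)
    also have "\<dots> = (\<Prod>j=2..b. (\<theta> / real j) ^ r j)" by (rule prod.cong) (auto simp: R_def)
    finally show ?thesis .
  qed
  have part1: "derange_expect \<theta> n (\<lambda>c. \<Prod>j=2..b. falling_fact (c j) (r j)) =
           (let m = (\<Sum>j=2..b. j * r j) in
              (if m \<le> n then 1 else 0) *
              (fact n / (esf_lambda \<theta> n * pochhammer \<theta> n)) *
              (esf_lambda \<theta> (n - m) * pochhammer \<theta> (n - m) / fact (n - m)) *
              (\<Prod>j=2..b. (\<theta> / real j) ^ r j))"
  proof -
    have g: "derange_expect \<theta> n (\<lambda>c. \<Prod>j=1..n. falling_fact (c j) (R j)) =
      (if (\<Sum>j=1..n. j * R j) \<le> n then (\<Prod>j=1..n. (\<theta> / real j) ^ R j) * WW \<theta> (n - (\<Sum>j=1..n. j * R j)) / WW \<theta> n else 0)"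
      by (rule derange_gen[OF th nn supp])
    show ?thesis using g unfolding Feq meq Peq Let_def inv lw by simp
  qed
  have part2: "derange_expect \<theta> n (\<lambda>c. real (c j)) =
           fact n / (esf_lambda \<theta> n * pochhammer \<theta> n) *
           (esf_lambda \<theta> (n - j) * pochhammer \<theta> (n - j) / fact (n - j)) * (\<theta> / real j)"
    if j: "j \<in> {2..n}" for j
  proof -
    let ?R = "\<lambda>i. if i = j then 1 else (0::nat)"
    have j1: "j \<in> {1..n}" using j by auto
    have s: "\<And>i. ?R i \<noteq> 0 \<Longrightarrow> 2 \<le> i \<and> i \<le> n" using j by (auto split: if_splits)
    have "derange_expect \<theta> n (\<lambda>c. \<Prod>i=1..n. falling_fact (c i) (?R i)) =
      (if (\<Sum>i=1..n. i * ?R i) \<le> n then (\<Prod>i=1..n. (\<theta> / real i) ^ ?R i) * WW \<theta> (n - (\<Sum>i=1..n. i * ?R i)) / WW \<theta> n else 0)"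
      by (rule derange_gen[OF th nn s])
    then show ?thesis unfolding ind_prod[OF j1] inv lw using j by (simp add: mult_ac)
  qed
  show ?thesis using part1 part2 by blast
qed

end
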